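(* For every $k\in\mathbb{Z}$, \[ [\alpha_{k+1}^\vee]_q\,\tau_k\,s_ks_{k+1}(\tau_{k+1})+[\alpha_k^\vee]_q\,s_{k+1}s_k(\tau_k)\,\tau_{k+1}=[\alpha_k^\vee+\alpha_{k+1}^\vee]_q\,s_k(\tau_k)\,s_{k+1}(\tau_{k+1}) \] holds in $D(\mathcal{A})$, where $w(\cdot)$ denotes the quantum birational Weyl group action.
   Context: $q$-difference case of type $A^{(1)}_{n-1}$, $n\ge3$: $I=\mathbb{Z}/n\mathbb{Z}$, $a_{ii}=2$, $a_{i,i\pm1}=-1$, $a_{ij}=0$ otherwise, $d_i=1$. $U_-$ is the $\mathbb{C}(q)$-algebra generated by $f_i$ ($i\in I$) with $q$-Serre relations $\sum_{k=0}^{1-a_{ij}}(-1)^kf_i^{(1-a_{ij}-k)}f_jf_i^{(k)}=0$ ($i\ne j$), $f_i^{(k)}=f_i^k/[k]_q!$, $[a]_q=(q^a-q^{-a})/(q-q^{-1})$. $A$ is a quotient of $U_-$ which is an integral domain with images $f_i\ne0$, and $f_i\mapsto f_{i+1}$ defines an algebra automorphism of $A$. $\tilde A=A[f_i^{-1}\mid i\in I]$ is the Ore localization at the multiplicative set generated by the $f_i$. $Q^\vee$ is the free $\mathbb{Z}$-module with basis $\delta^\vee,\epsilon_1^\vee,\dots,\epsilon_n^\vee$; set $\epsilon^\vee_{k+n}=\epsilon^\vee_k-\delta^\vee$ for all $k\in\mathbb{Z}$ and $\alpha_k^\vee=\epsilon_k^\vee-\epsilon_{k+1}^\vee$ (so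 $\alpha^\vee_{k+n}=\alpha^\vee_k$). $P=\mathrm{Hom}(Q^\vee,\mathbb{Z})$ with dual basis $\Lambda_0,\epsilon_1,\dots,\epsilon_n$; $\epsilon_{k+n}=\epsilon_k$; $\varpi_k=\epsilon_1+\dots+\epsilon_k$ for $k\ge0$, extended by $\varpi_{k+n}=\varpi_k+\varpi_n$ for all $k\in\mathbb{Z}$; $\Lambda_k=\Lambda_0+\varpi_k$; $\alpha_k=\epsilon_k-\epsilon_{k+1}$. For $k\in\mathbb{Z}$ write $s_k=s_{\bar k}$, $f_k=f_{\bar k}$, $\alpha_{\bar k}=\alpha_k$, $\alpha^\vee_{\bar k}=\alpha^\vee_k$. The Weyl group $W$ (generated by $s_i$, $i\in I$) acts on $Q^\vee,P$ by $s_i(\beta)=\beta-\langle\beta,\alpha_i\rangle\alpha_i^\vee$, $s_i(\lambda)=\lambda-\langle\alpha_i^\vee,\lambda\rangle\alpha_i$. $\tilde A^{\mathrm{pa}}=\tilde A[q^\beta\mid\beta\in Q^\vee]$ with $q^\beta$ central, $q^\beta q^\gamma=q^{\beta+\gamma}$; $[\beta]_q:=(q^\beta-q^{-\beta})/(q-q^{-1})$ for $\beta\in Q^\vee$. For $\lambda\in P$, $\phi_\lambda$ substitutes $q^\beta\mapsto q^{\langle\beta,\lambda\rangle}$, and $(\phi_\lambda)_\lambda$ identifies $\tilde A^{\mathrm{pa}}$ with a subalgebra of $\tilde A^P$. For an algebra $R$, $D(R^P)$ is generated by $R^P$ and invertible $\tau^\mu$ ($\mu\in P$) with $\tau^\lambda\tau^\mu=\tau^{\lambda+\mu}$,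 $\tau^\mu a=t_\mu(a)\tau^\mu$, $t_\mu((a_\lambda)_\lambda)=(a_{\lambda+\mu})_\lambda$. Fractional powers $f_i^\beta=(f_i^{\langle\beta,\lambda\rangle})_\lambda$. $\mathcal{A}\subset\tilde A^P$ is generated by $\tilde A^{\mathrm{pa}}$ and all $f_i^\beta$; $D(\mathcal{A})$ by $\mathcal{A}$ and all $\tau^\mu$. Tilde action: $\tilde w((a_\lambda)_\lambda)=(a_{w^{-1}(\lambda)})_\lambda$, $\tilde w(\tau^\mu)=\tau^{w(\mu)}$. The quantum birational Weyl group action of $W$ on $D(\mathcal{A})$ is $s_i(x)=f_i^{\alpha_i^\vee}\tilde s_i(x)f_i^{-\alpha_i^\vee}$. The $\tau$-variables are $\tau_k=\tau^{\Lambda_k}$ for $k\in\mathbb{Z}$. *)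

theory Defs
  imports "HOL-Computational_Algebra.Fraction_Field" "HOL-Computational_Algebra.Polynomial"
    "Berlekamp_Zassenhaus.Finite_Field"
begin

type_synonym Cq = "complex poly fract"

definition qX :: Cq where "qX = Fract [:0, 1:] 1"

definition qbr :: "int \<Rightarrow> Cq" where
  "qbr m = (qX powi m - qX powi (- m)) / (qX - inverse qX)"

definition qfact :: "nat \<Rightarrow> Cq" where
  "qfact m = (\<Prod>j\<in>{1..m}. qbr (int j))"

definition cartan :: "'n::nontriv mod_ring \<Rightarrow> 'n mod_ring \<Rightarrow> int" where
  "cartan i j = (if i = j then 2 else if j = i + 1 \<or> j = i - 1 then -1 else 0)"

text \<open>Both are represented as int x (I => int): for Q^vee the coordinates w.r.t.
  delta^vee and eps^vee_1..eps^vee_n (eps^vee_j indexed by the class of j in I);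
  for P w.r.t. Lambda_0 and eps_1..eps_n.\<close>
type_synonym 'n lat = "int \<times> ('n mod_ring \<Rightarrow> int)"

definition wzero :: "'n::finite lat" where "wzero = (0, \<lambda>_. 0)"
definition wadd :: "'n::finite lat \<Rightarrow> 'n lat \<Rightarrow> 'n lat" where
  "wadd x y = (fst x + fst y, \<lambda>j. snd x j + snd y j)"
definition wsmul :: "int \<Rightarrow> 'n::finite lat \<Rightarrow> 'n lat" where
  "wsmul c x = (c * fst x, \<lambda>j. c * snd x j)"
definition wneg :: "'n::finite lat \<Rightarrow> 'n lat" where
  "wneg x = wsmul (-1) x"
definition wsub :: "'n::finite lat \<Rightarrow> 'n lat \<Rightarrow> 'n lat" where
  "wsub x y = wadd x (wneg y)"

text \<open>Pairing <beta, lambda> between Q^vee and P (dual bases).\<close>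
definition pair :: "'n::finite lat \<Rightarrow> 'n lat \<Rightarrow> int" where
  "pair b l = fst b * fst l + (\<Sum>j\<in>UNIV. snd b j * snd l j)"

definition ncard :: "'n::finite itself \<Rightarrow> int" where "ncard _ = int CARD('n)"

definition Lam0 :: "'n::nontriv lat" where "Lam0 = (1, \<lambda>_. 0)"
definition eps :: "int \<Rightarrow> 'n::nontriv lat" where
  "eps k = (0, \<lambda>j. if j = of_int k then 1 else 0)"
definition varpi0 :: "int \<Rightarrow> 'n::nontriv lat" where
  "varpi0 r = (0, \<lambda>j. \<Sum>m\<in>{1..r}. snd (eps m :: 'n lat) j)"
text \<open>varpi_k for k in Z via varpi_(k+n) = varpi_k + varpi_n\<close>
definition varpi :: "int \<Rightarrow> 'n::nontriv lat" where
  "varpi k = wadd (wsmul (k div ncard TYPE('n)) (varpi0 (ncard TYPE('n))))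
                  (varpi0 (k mod ncard TYPE('n)))"
definition Lam :: "int \<Rightarrow> 'n::nontriv lat" where
  "Lam k = wadd Lam0 (varpi k)"
definition alpha :: "int \<Rightarrow> 'n::nontriv lat" where
  "alpha k = wsub (eps k) (eps (k + 1))"

text \<open>Coweights: eps^vee_k for k in Z, using eps^vee_(k+n) = eps^vee_k - delta^vee
  (k = q n + r with r in {1..n}).\<close>
definition delv :: "'n::nontriv lat" where "delv = (1, \<lambda>_. 0)"
definition epsv :: "int \<Rightarrow> 'n::nontriv lat" where
  "epsv k = wsub (0, \<lambda>j. if j = of_int k then 1 else 0)
                 (wsmul ((k - 1) div ncard TYPE('n)) delv)"
definition alphav :: "int \<Rightarrow> 'n::nontriv lat" where
  "alphav k = wsub (epsv k) (epsv (k + 1))"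

definition sP :: "int \<Rightarrow> 'n::nontriv lat \<Rightarrow> 'n lat" where
  "sP k l = wsub l (wsmul (pair (alphav k) l) (alpha k))"

definition ring_inv :: "'a::ring_1 \<Rightarrow> 'a" where
  "ring_inv x = (THE y. x * y = 1 \<and> y * x = 1)"
definition zpow :: "'a::ring_1 \<Rightarrow> int \<Rightarrow> 'a" where
  "zpow x m = (if 0 \<le> m then x ^ nat m else ring_inv x ^ nat (- m))"

inductive_set genA :: "(Cq \<Rightarrow> 'a::ring_1) \<Rightarrow> ('i \<Rightarrow> 'a) \<Rightarrow> 'a set"
  for \<iota> f where
  "\<iota> c \<in> genA \<iota> f"
| "f i \<in> genA \<iota> f"
| "x \<in> genA \<iota> f \<Longrightarrow> y \<in> genA \<iota> f \<Longrightarrow> x + y \<in> genA \<iota> f"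
| "x \<in> genA \<iota> f \<Longrightarrow> y \<in> genA \<iota> f \<Longrightarrow> x * y \<in> genA \<iota> f"

inductive_set genL :: "(Cq \<Rightarrow> 'a::ring_1) \<Rightarrow> ('i \<Rightarrow> 'a) \<Rightarrow> 'a set"
  for \<iota> f where
  "\<iota> c \<in> genL \<iota> f"
| "f i \<in> genL \<iota> f"
| "ring_inv (f i) \<in> genL \<iota> f"
| "x \<in> genL \<iota> f \<Longrightarrow> y \<in> genL \<iota> f \<Longrightarrow> x + y \<in> genL \<iota> f"
| "x \<in> genL \<iota> f \<Longrightarrow> y \<in> genL \<iota> f \<Longrightarrow> x * y \<in> genL \<iota> f"

definition dpow :: "(Cq \<Rightarrow> 'a::ring_1) \<Rightarrow> 'a \<Rightarrow> nat \<Rightarrow> 'a" where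
  "dpow \<iota> x k = \<iota> (inverse (qfact k)) * x ^ k"

text \<open>An element sum_mu c_mu tau^mu of D(Atilde^P) is represented by mu |-> c_mu,
  where c_mu :: P => Atilde (finitely many nonzero c_mu).\<close>
type_synonym ('n, 'a) Dalg = "'n lat \<Rightarrow> 'n lat \<Rightarrow> 'a"

definition dadd :: "('n::nontriv, 'a::ring_1) Dalg \<Rightarrow> ('n, 'a) Dalg \<Rightarrow> ('n, 'a) Dalg" where
  "dadd x y = (\<lambda>\<mu> l. x \<mu> l + y \<mu> l)"

text \<open>(c tau^mu)(d tau^nu) = c t_mu(d) tau^(mu+nu), t_mu(d)_lambda = d_(lambda+mu).\<close>
definition dmul :: "('n::nontriv, 'a::ring_1) Dalg \<Rightarrow> ('n, 'a) Dalg \<Rightarrow> ('n, 'a) Dalg" where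
  "dmul x y = (\<lambda>\<rho> l. \<Sum>\<mu>\<in>{\<mu>. x \<mu> \<noteq> (\<lambda>_. 0)}. x \<mu> l * y (wsub \<rho> \<mu>) (wadd l \<mu>))"

definition demb :: "('n::nontriv lat \<Rightarrow> 'a::ring_1) \<Rightarrow> ('n, 'a) Dalg" where
  "demb c = (\<lambda>\<mu>. if \<mu> = wzero then c else (\<lambda>_. 0))"

definition tau :: "'n::nontriv lat \<Rightarrow> ('n, 'a::ring_1) Dalg" where
  "tau \<mu> = (\<lambda>\<nu>. if \<nu> = \<mu> then (\<lambda>_. 1) else (\<lambda>_. 0))"

text \<open>Tilde action of s_k: s_k~(sum c_mu tau^mu) = sum s_k~(c_mu) tau^(s_k mu),
  s_k~(c)_lambda = c_(s_k^-1 lambda), and s_k^-1 = s_k.\<close>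
definition dtil :: "int \<Rightarrow> ('n::nontriv, 'a::ring_1) Dalg \<Rightarrow> ('n, 'a) Dalg" where
  "dtil k x = (\<lambda>\<rho> l. x (sP k \<rho>) (sP k l))"

text \<open>Fractional power f_i^beta = (f_i^<beta,lambda>)_lambda.\<close>
definition fpow :: "('n::nontriv mod_ring \<Rightarrow> 'a::ring_1) \<Rightarrow> int \<Rightarrow> 'n lat \<Rightarrow> ('n lat \<Rightarrow> 'a)" where
  "fpow f k \<beta> = (\<lambda>l. zpow (f (of_int k)) (pair \<beta> l))"

definition qact :: "('n::nontriv mod_ring \<Rightarrow> 'a::ring_1) \<Rightarrow> int \<Rightarrow> ('n, 'a) Dalg \<Rightarrow> ('n, 'a) Dalg" where
  "qact f k x = dmul (dmul (demb (fpow f k (alphav k))) (dtil k x))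
                     (demb (fpow f k (wneg (alphav k))))"

text \<open>[beta]_q in Atilde^pa, viewed in Atilde^P: ([<beta,lambda>]_q)_lambda.\<close>
definition qbrP :: "(Cq \<Rightarrow> 'a::ring_1) \<Rightarrow> 'n::nontriv lat \<Rightarrow> ('n lat \<Rightarrow> 'a)" where
  "qbrP \<iota> \<beta> = (\<lambda>l. \<iota> (qbr (pair \<beta> l)))"

end

theory Submission
  imports Defs
begin



lemma qX_sq_ne: "qX * qX \<noteq> 1" "qX * qX \<noteq> -1" "qX \<noteq> 0"
proof -
  have c: "coeff ([:0,1:] * [:0,1:] :: complex poly) 2 = 1"
    by (simp add: numeral_2_eq_2)
  show "qX * qX \<noteq> 1"
  proof
    assume "qX * qX = 1"
    hence "Fract ([:0,1:] * [:0,1:] :: complex poly) 1 = Fract 1 1"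
      by (simp add: qX_def One_fract_def)
    hence "([:0,1:] * [:0,1:] :: complex poly) = 1" by (simp add: eq_fract)
    hence "coeff ([:0,1:] * [:0,1:] :: complex poly) 2 = coeff 1 2" by simp
    with c show False by simp
  qed
  show "qX * qX \<noteq> -1"
  proof
    assume "qX * qX = -1"
    hence "Fract ([:0,1:] * [:0,1:] :: complex poly) 1 = Fract (-1) 1"
      by (simp add: qX_def One_fract_def)
    hence "([:0,1:] * [:0,1:] :: complex poly) = -1" by (simp add: eq_fract)
    hence "coeff ([:0,1:] * [:0,1:] :: complex poly) 2 = coeff (-1) 2" by simp
    with c show False by simp
  qed
  show "qX \<noteq> 0"
    by (simp add: qX_def Zero_fract_def eq_fract)
qed

lemma qden_ne: "qX - inverse qX \<noteq> 0"
  using qX_sq_ne by (auto simp: field_simps)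

lemma qplus_ne: "qX + inverse qX \<noteq> 0"
proof
  assume "qX + inverse qX = 0"
  hence "qX * (qX + inverse qX) = 0" by simp
  hence "qX * qX + 1 = 0" using qX_sq_ne(3) by (simp add: distrib_left)
  hence "qX * qX = -1" by (simp add: eq_neg_iff_add_eq_0)
  thus False using qX_sq_ne by simp
qed

lemma qbr_alt: "qbr m = (qX powi m - inverse (qX powi m)) / (qX - inverse qX)"
  by (simp add: qbr_def power_int_minus)

lemma qbr_0[simp]: "qbr 0 = 0" by (simp add: qbr_def)
lemma qbr_1[simp]: "qbr 1 = 1" using qden_ne by (simp add: qbr_alt)
lemma qbr_2: "qbr 2 = qX + inverse qX"
proof -
  have "qX powi 2 = qX * qX" by (simp add: power2_eq_square)
  thus ?thesis using qden_ne qX_sq_ne unfolding qbr_alt by (simp add: field_simps)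
qed
lemma qbr_2_ne: "qbr 2 \<noteq> 0" using qbr_2 qplus_ne by simp

lemma aux_div: "((c::'a::field) * x - y) / D = c * (x / D) - y / D"
  by (simp add: diff_divide_distrib)

lemma qbr_rec: "qbr (a + 2) = qbr 2 * qbr (a + 1) - qbr a"
proof -
  have n: "qX \<noteq> 0" using qX_sq_ne by simp
  have p: "qX powi a \<noteq> 0" using n by simp
  have e1: "qX powi (a+2) = qX powi a * (qX * qX)" "qX powi (a+1) = qX powi a * qX"
    using n by (simp_all add: power_int_add power2_eq_square)
  have key: "qX powi a * (qX * qX) - inverse (qX powi a * (qX * qX)) =
     (qX + inverse qX) * (qX powi a * qX - inverse (qX powi a * qX)) - (qX powi a - inverse (qX powi a))"
    using n p by (simp add: field_simps)
  show ?thesis unfolding qbr_2 unfolding qbr_alt e1 key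
    by (rule aux_div)
qed

lemma gen: fixes t u v :: "'a::field" assumes "t \<noteq> 0" "u \<noteq> 0" "v \<noteq> 0" "t - inverse t \<noteq> 0"
  shows "((v - inverse v) / (t - inverse t)) * ((u*t - inverse (u*t)) / (t - inverse t))
   - ((u - inverse u) / (t - inverse t)) * ((v * inverse t - inverse (v * inverse t))/(t - inverse t))
   = (u*v - inverse (u*v)) / (t - inverse t)"
proof -
  define D where "D = t - inverse t"
  have D: "D \<noteq> 0" using assms D_def by simp
  have key: "(v - inverse v) * (u*t - inverse (u*t)) - (u - inverse u) * (v * inverse t - inverse (v * inverse t))
     = (u*v - inverse (u*v)) * D" unfolding D_def using assms(1-3)
    by (simp add: field_simps)
  have "((v - inverse v) / D) * ((u*t - inverse (u*t)) / D)
   - ((u - inverse u) / D) * ((v * inverse t - inverse (v * inverse t))/D)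
   = ((v - inverse v) * (u*t - inverse (u*t)) - (u - inverse u) * (v * inverse t - inverse (v * inverse t))) / (D * D)"
    using D by (simp add: field_simps)
  also have "\<dots> = (u*v - inverse (u*v)) / D" unfolding key using D by simp
  finally show ?thesis unfolding D_def .
qed

lemma qbr_id: "qbr b * qbr (a + 1) - qbr a * qbr (b - 1) = qbr (a + b)"
proof -
  have n: "qX \<noteq> 0" using qX_sq_ne by simp
  have e1: "qX powi (a+b) = qX powi a * qX powi b" "qX powi (a+1) = qX powi a * qX"
    "qX powi (b-1) = qX powi b * inverse qX"
    using n by (simp_all add: power_int_add power_int_diff field_simps)
  show ?thesis unfolding qbr_alt e1
    by (rule gen) (use n qden_ne in auto)
qed




lemma ring_inv_eq: assumes "(X::'a::ring_1) * g = 1" "g * X = 1" shows "ring_inv X = g"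
  unfolding ring_inv_def
proof (rule the_equality)
  show "X * g = 1 \<and> g * X = 1" using assms by simp
  fix y assume "X * y = 1 \<and> y * X = 1"
  hence "y = y * (X * g)" "X * y = 1" "y * X = 1" using assms by auto
  thus "y = g" by (simp add: mult.assoc[symmetric])
qed

lemma zpow_neg: assumes "(X::'a::ring_1) * g = 1" "g * X = 1" "m < 0"
  shows "zpow X m = g ^ nat (- m)"
  using assms by (simp add: zpow_def ring_inv_eq)

lemma zpow_nonneg: "0 \<le> m \<Longrightarrow> zpow X m = X ^ nat m"
  by (simp add: zpow_def)

lemma zpow_0[simp]: "zpow X 0 = 1" by (simp add: zpow_def)
lemma zpow_1[simp]: "zpow X 1 = X" by (simp add: zpow_def)

lemma zpow_succ_right: assumes "(X::'a::ring_1) * g = 1" "g * X = 1"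
  shows "zpow X (m + 1) = zpow X m * X"
proof (cases "0 \<le> m")
  case True
  then have "nat (m+1) = Suc (nat m)" by simp
  then show ?thesis using True by (simp add: zpow_nonneg power_commutes)
next
  case False
  then have e: "nat (- m) = Suc (nat (- m - 1))" by simp
  have "zpow X m * X = g ^ nat (- m - 1) * (g * X)"
    using False assms by (simp add: zpow_neg e power_Suc2 mult.assoc del: power_Suc)
  also have "\<dots> = g ^ nat (- m - 1)" using assms by simp
  also have "\<dots> = zpow X (m + 1)"
  proof (cases "m + 1 = 0")
    case True then show ?thesis by simp
  next
    case F: False
    then show ?thesis using False assms by (simp add: zpow_neg)
  qed
  finally show ?thesis by simp
qed

lemma zpow_succ_left: assumes "(X::'a::ring_1) * g = 1" "g * X = 1"
  shows "zpow X (m + 1) = X * zpow X m"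
proof (cases "0 \<le> m")
  case True
  then have "nat (m+1) = Suc (nat m)" by simp
  then show ?thesis using True by (simp add: zpow_nonneg)
next
  case False
  then have e: "nat (- m) = Suc (nat (- m - 1))" by simp
  have "X * zpow X m = (X * g) * g ^ nat (- m - 1)"
    using False assms by (simp add: zpow_neg e flip: mult.assoc)
  also have "\<dots> = g ^ nat (- m - 1)" using assms by simp
  also have "\<dots> = zpow X (m + 1)"
  proof (cases "m + 1 = 0")
    case True then show ?thesis by simp
  next
    case F: False
    then show ?thesis using False assms by (simp add: zpow_neg)
  qed
  finally show ?thesis by simp
qed

lemma zpow_pred_right: assumes "(X::'a::ring_1) * g = 1" "g * X = 1"
  shows "zpow X (m - 1) = zpow X m * g"
proof -
  have "zpow X m * g = zpow X (m - 1) * X * g"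
    using zpow_succ_right[OF assms, of "m - 1"] by simp
  also have "\<dots> = zpow X (m - 1)" using assms by (simp add: mult.assoc)
  finally show ?thesis by simp
qed

lemma zpow_pred_left: assumes "(X::'a::ring_1) * g = 1" "g * X = 1"
  shows "zpow X (m - 1) = g * zpow X m"
proof -
  have "g * zpow X m = g * (X * zpow X (m - 1))"
    using zpow_succ_left[OF assms, of "m - 1"] by simp
  also have "\<dots> = zpow X (m - 1)" using assms by (simp add: mult.assoc[symmetric])
  finally show ?thesis by simp
qed

lemma zpow_add: assumes "(X::'a::ring_1) * g = 1" "g * X = 1"
  shows "zpow X m * zpow X n = zpow X (m + n)"
proof (induction n rule: int_induct[where k = 0])
  case base then show ?case by simp
next
  case (step1 i)
  have "zpow X m * zpow X (i + 1) = (zpow X m * zpow X i) * X"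
    by (simp add: zpow_succ_right[OF assms] mult.assoc)
  also have "\<dots> = zpow X (m + i + 1)" using step1 by (simp add: zpow_succ_right[OF assms])
  finally show ?case by (simp add: add.assoc)
next
  case (step2 i)
  have "zpow X m * zpow X (i - 1) = (zpow X m * zpow X i) * g"
    by (simp add: zpow_pred_right[OF assms] mult.assoc)
  also have "\<dots> = zpow X (m + i - 1)" using step2 by (simp add: zpow_pred_right[OF assms])
  finally show ?case by (simp add: algebra_simps)
qed

locale qalg =
  fixes \<iota> :: "Cq \<Rightarrow> 'a::ring_1"
  assumes alg_one: "\<iota> 1 = 1"
    and alg_add: "\<And>x y. \<iota> (x + y) = \<iota> x + \<iota> y"
    and alg_mult: "\<And>x y. \<iota> (x * y) = \<iota> x * \<iota> y"
    and alg_central: "\<And>c a. \<iota> c * a = a * \<iota> c"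
begin

lemma alg_zero[simp]: "\<iota> 0 = 0"
  using alg_add[of 0 0] by simp

lemma alg_minus: "\<iota> (- x) = - \<iota> x"
  using alg_add[of x "-x"] by (simp add: eq_neg_iff_add_eq_0 add.commute)

lemma alg_diff: "\<iota> (x - y) = \<iota> x - \<iota> y"
  using alg_add[of x "-y"] by (simp add: alg_minus)

lemma sc_left: "x * (\<iota> c * y) = \<iota> c * (x * y)"
  by (metis alg_central mult.assoc)

lemma sc_right: "x * \<iota> c = \<iota> c * x"
  by (simp add: alg_central)

lemma conj_formula:
  assumes inv: "X * g = 1" "g * X = 1"
    and serre: "X * X * Y + Y * X * X = \<iota> (qbr 2) * (X * Y * X)"
  shows "zpow X (a + 1) * Y * zpow X (- a) = \<iota> (qbr (a + 1)) * (X * Y) - \<iota> (qbr a) * (Y * X)"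
proof (induction a rule: int_induct[where k = 0])
  case base then show ?case by (simp add: alg_one)
next
  case (step1 i)
  have s1: "X * X * Y * g = \<iota> (qbr 2) * (X * Y) - Y * X"
  proof -
    have "X * X * Y = \<iota> (qbr 2) * (X * Y * X) - Y * X * X" using serre
      by (simp add: eq_diff_eq)
    hence "X * X * Y * g = (\<iota> (qbr 2) * (X * Y * X) - Y * X * X) * g" by simp
    also have "\<dots> = \<iota> (qbr 2) * (X * Y * (X * g)) - Y * X * (X * g)"
      by (simp add: algebra_simps)
    finally show ?thesis using inv by simp
  qed
  have "zpow X (i + 1 + 1) * Y * zpow X (- (i + 1)) = X * (zpow X (i + 1) * Y * zpow X (- i)) * g"
    using zpow_succ_left[OF inv, of "i+1"] zpow_pred_right[OF inv, of "- i"]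
    by (simp add: mult.assoc)
  also have "\<dots> = X * (\<iota> (qbr (i + 1)) * (X * Y) - \<iota> (qbr i) * (Y * X)) * g"
    using step1 by simp
  also have "\<dots> = \<iota> (qbr (i + 1)) * (X * X * Y * g) - \<iota> (qbr i) * (X * Y * (X * g))"
    by (simp add: algebra_simps sc_left)
  also have "\<dots> = \<iota> (qbr (i + 1)) * (\<iota> (qbr 2) * (X * Y) - Y * X) - \<iota> (qbr i) * (X * Y)"
    using s1 inv by simp
  also have "\<dots> = \<iota> (qbr 2 * qbr (i + 1) - qbr i) * (X * Y) - \<iota> (qbr (i + 1)) * (Y * X)"
    by (simp add: algebra_simps alg_diff alg_mult)
  also have "\<dots> = \<iota> (qbr (i + 1 + 1)) * (X * Y) - \<iota> (qbr (i + 1)) * (Y * X)"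
    using qbr_rec[of i] by (simp add: add.assoc)
  finally show ?case .
next
  case (step2 i)
  have s1: "g * Y * X * X = \<iota> (qbr 2) * (Y * X) - X * Y"
  proof -
    have "Y * X * X = \<iota> (qbr 2) * (X * Y * X) - X * X * Y" using serre
      by (simp add: eq_diff_eq add.commute)
    hence "g * (Y * X * X) = g * (\<iota> (qbr 2) * (X * Y * X) - X * X * Y)" by simp
    also have "\<dots> = \<iota> (qbr 2) * ((g * X) * Y * X) - (g * X) * X * Y"
      by (simp add: algebra_simps sc_left)
    finally show ?thesis using inv by (simp add: mult.assoc)
  qed
  have "zpow X (i - 1 + 1) * Y * zpow X (- (i - 1)) = g * (zpow X (i + 1) * Y * zpow X (- i)) * X"
    using zpow_pred_left[OF inv, of "i+1"] zpow_succ_right[OF inv, of "- i"]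
    by (simp add: mult.assoc)
  also have "\<dots> = g * (\<iota> (qbr (i + 1)) * (X * Y) - \<iota> (qbr i) * (Y * X)) * X"
    using step2 by simp
  also have "\<dots> = \<iota> (qbr (i + 1)) * ((g * X) * Y * X) - \<iota> (qbr i) * (g * Y * X * X)"
    by (simp add: algebra_simps sc_left)
  also have "\<dots> = \<iota> (qbr (i + 1)) * (Y * X) - \<iota> (qbr i) * (\<iota> (qbr 2) * (Y * X) - X * Y)"
    using s1 inv by simp
  also have "\<dots> = \<iota> (qbr i) * (X * Y) - \<iota> (qbr 2 * qbr i - qbr (i + 1)) * (Y * X)"
    by (simp add: algebra_simps alg_diff alg_mult)
  also have "\<dots> = \<iota> (qbr (i - 1 + 1)) * (X * Y) - \<iota> (qbr (i - 1)) * (Y * X)"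
  proof -
    have e1: "i - 1 + 2 = i + 1" "i - 1 + 1 = i" by simp_all
    have h: "qbr 2 * qbr i - qbr (i+1) = qbr (i - 1)"
      using qbr_rec[of "i - 1", unfolded e1] by simp
    show ?thesis by (simp only: h e1)
  qed
  finally show ?case .
qed

end



abbreviation NN :: "'n::nontriv itself \<Rightarrow> int" where "NN _ \<equiv> int CARD('n)"

lemma ofint_eq: "((of_int x :: 'n::nontriv mod_ring) = of_int y) \<longleftrightarrow> x mod int CARD('n) = y mod int CARD('n)"
  using of_int_eq_iff_cong_CHAR[where 'a="'n mod_ring", of x y] by (simp add: cong_def)

lemma dm: "(0::int) \<le> s \<Longrightarrow> s < N \<Longrightarrow> (s + c*N) div N = c \<and> (s + c*N) mod N = s"
  by simp

lemma sum_ind: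
  assumes "0 \<le> R" "R \<le> int CARD('n::nontriv)"
  shows "(\<Sum>r\<in>{1..R}. if (of_int t :: 'n mod_ring) = of_int r then 1 else 0) =
         (if (t - 1) mod int CARD('n) < R then (1::int) else 0)"
proof -
  let ?N = "int CARD('n)"
  have N: "?N > 1" using nontriv[where 'a='n] by simp
  have "(\<Sum>r\<in>{1..R}. if (of_int t :: 'n mod_ring) = of_int r then 1 else (0::int)) =
        (\<Sum>r\<in>{1..R}. if r = (t - 1) mod ?N + 1 then 1 else 0)"
  proof (rule sum.cong)
    fix r assume r: "r \<in> {1..R}"
    have "((of_int t :: 'n mod_ring) = of_int r) \<longleftrightarrow> ((of_int (t - 1) :: 'n mod_ring) = of_int (r - 1))"
      by simp
    also have "\<dots> \<longleftrightarrow> (t - 1) mod ?N = (r - 1) mod ?N" by (rule ofint_eq)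
    also have "(r - 1) mod ?N = r - 1" using r assms by simp
    finally show "(if (of_int t :: 'n mod_ring) = of_int r then 1 else (0::int)) =
        (if r = (t - 1) mod ?N + 1 then 1 else 0)" by auto
  qed simp
  also have "\<dots> = (if (t - 1) mod ?N < R then 1 else 0)"
    using N by (simp add: sum.delta')
  finally show ?thesis .
qed

lemma snd_Lam: "snd (Lam m :: 'n::nontriv lat) (of_int t) =
   m div int CARD('n) + (if (t - 1) mod int CARD('n) < m mod int CARD('n) then 1 else 0)"
  "fst (Lam m :: 'n lat) = 1"
proof -
  let ?N = "int CARD('n)"
  have N: "?N > 1" using nontriv[where 'a='n] by simp
  have a: "(\<Sum>r\<in>{1..?N}. if (of_int t :: 'n mod_ring) = of_int r then 1 else 0) = (1::int)"
    using sum_ind[where 'n='n, of ?N t] N by simp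
  have b: "(\<Sum>r\<in>{1..m mod ?N}. if (of_int t :: 'n mod_ring) = of_int r then 1 else 0) =
     (if (t - 1) mod ?N < m mod ?N then (1::int) else 0)"
    using N by (intro sum_ind) (simp_all add: order_less_imp_le)
  show "snd (Lam m :: 'n::nontriv lat) (of_int t) =
   m div int CARD('n) + (if (t - 1) mod int CARD('n) < m mod int CARD('n) then 1 else 0)"
    unfolding Lam_def varpi_def varpi0_def eps_def wadd_def wsmul_def Lam0_def ncard_def
    using a b by simp
  show "fst (Lam m :: 'n lat) = 1"
    unfolding Lam_def varpi_def varpi0_def eps_def wadd_def wsmul_def Lam0_def by simp
qed

lemma snd_alphav: "snd (alphav k :: 'n::nontriv lat) j =
   (if j = of_int k then 1 else 0) - (if j = of_int (k+1) then 1 else 0)"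
  by (simp add: alphav_def epsv_def wsub_def wadd_def wneg_def wsmul_def delv_def)

lemma fst_alphav: "fst (alphav k :: 'n::nontriv lat) = k div int CARD('n) - (k - 1) div int CARD('n)"
  by (simp add: alphav_def epsv_def wsub_def wadd_def wneg_def wsmul_def delv_def ncard_def)

lemma snd_alpha: "snd (alpha k :: 'n::nontriv lat) j =
   (if j = of_int k then 1 else 0) - (if j = of_int (k+1) then 1 else 0)"
  by (simp add: alpha_def eps_def wsub_def wadd_def wneg_def wsmul_def)

lemma fst_alpha: "fst (alpha k :: 'n::nontriv lat) = 0"
  by (simp add: alpha_def eps_def wsub_def wadd_def wneg_def wsmul_def)

lemma pair_alphav: "pair (alphav k :: 'n::nontriv lat) l =
   (k div int CARD('n) - (k - 1) div int CARD('n)) * fst l + snd l (of_int k) - snd l (of_int (k + 1))"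
proof -
  have "(\<Sum>j\<in>UNIV. snd (alphav k :: 'n lat) j * snd l j) =
     (\<Sum>j\<in>UNIV. (if j = of_int k then snd l j else 0)) - (\<Sum>j\<in>UNIV. (if j = of_int (k+1) then snd l j else 0))"
    unfolding sum_subtractf[symmetric] by (rule sum.cong) (simp_all add: snd_alphav)
  also have "\<dots> = snd l (of_int k) - snd l (of_int (k + 1))"
    by (simp add: sum.delta)
  finally show ?thesis unfolding pair_def fst_alphav by simp
qed




lemma arith_cases:
  fixes k N :: int assumes N: "N \<ge> 3"
  shows "(k div N - (k-1) div N) + (if (k-1) mod N < k mod N then 1 else 0) = 1"
    and "(k div N - (k-1) div N) + (if (k-1) mod N < (k+1) mod N then 1 else 0) - (if k mod N < (k+1) mod N then 1 else 0) = 0"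
    and "((k+1) div N - k div N) - (if (k+1) mod N < k mod N then 1 else (0::int)) = 0"
proof -
  define r q where "r = k mod N" and "q = k div N"
  have k: "k = r + q * N" unfolding r_def q_def by simp
  have r: "0 \<le> r" "r < N" unfolding r_def using N by simp_all
  have A: "(k - 1) div N = (if r = 0 then q - 1 else q) \<and> (k - 1) mod N = (if r = 0 then N - 1 else r - 1)"
  proof (cases "r = 0")
    case True
    have e: "k - 1 = (N - 1) + (q - 1) * N" using k True by (simp add: algebra_simps)
    have "(k - 1) div N = q - 1 \<and> (k - 1) mod N = N - 1"
      unfolding e by (rule dm) (use N in simp_all)
    then show ?thesis using True by simp
  next
    case False
    have e: "k - 1 = (r - 1) + q * N" using k by simp
    have "(k - 1) div N = q \<and> (k - 1) mod N = r - 1"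
      unfolding e by (rule dm) (use r False in simp_all)
    then show ?thesis using False by simp
  qed
  have B: "(k + 1) div N = (if r = N - 1 then q + 1 else q) \<and> (k + 1) mod N = (if r = N - 1 then 0 else r + 1)"
  proof (cases "r = N - 1")
    case True
    have e: "k + 1 = 0 + (q + 1) * N" using k True by (simp add: algebra_simps)
    have "(k + 1) div N = q + 1 \<and> (k + 1) mod N = 0"
      unfolding e by (rule dm) (use N in simp_all)
    then show ?thesis using True by simp
  next
    case False
    have e: "k + 1 = (r + 1) + q * N" using k by simp
    have "(k + 1) div N = q \<and> (k + 1) mod N = r + 1"
      unfolding e by (rule dm) (use r False in simp_all)
    then show ?thesis using False by simp
  qed
  have C: "k div N = q" "k mod N = r" unfolding q_def r_def by simp_all
  show "(k div N - (k-1) div N) + (if (k-1) mod N < k mod N then 1 else 0) = 1"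
    using A C r by auto
  show "(k div N - (k-1) div N) + (if (k-1) mod N < (k+1) mod N then 1 else 0) - (if k mod N < (k+1) mod N then 1 else 0) = 0"
    using A B C r N by auto
  show "((k+1) div N - k div N) - (if (k+1) mod N < k mod N then 1 else (0::int)) = 0"
    using B C r N by auto
qed

context
  assumes n3: "CARD('n::nontriv) \<ge> 3"
begin

lemma distinct_idx:
  "(of_int (k+1) :: 'n mod_ring) \<noteq> of_int k"
  "(of_int (k+2) :: 'n mod_ring) \<noteq> of_int k"
  "(of_int (k+2) :: 'n mod_ring) \<noteq> of_int (k + 1)"
proof -
  have N: "int CARD('n) \<ge> 3" using n3 by simp
  have m: "x mod int CARD('n) = y mod int CARD('n) \<Longrightarrow> int CARD('n) dvd (x - y)" for x y
    by (simp add: mod_eq_dvd_iff)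
  show "(of_int (k+1) :: 'n mod_ring) \<noteq> of_int k"
  proof
    assume "(of_int (k+1) :: 'n mod_ring) = of_int k"
    hence "int CARD('n) dvd 1" using m[of "k+1" k] by (simp only: ofint_eq) simp
    thus False using N by simp
  qed
  show "(of_int (k+2) :: 'n mod_ring) \<noteq> of_int k"
  proof
    assume "(of_int (k+2) :: 'n mod_ring) = of_int k"
    hence "int CARD('n) dvd 2" using m[of "k+2" k] by (simp only: ofint_eq) simp
    thus False using N zdvd_imp_le[of "int CARD('n)" 2] by simp
  qed
  show "(of_int (k+2) :: 'n mod_ring) \<noteq> of_int (k+1)"
  proof
    assume "(of_int (k+2) :: 'n mod_ring) = of_int (k+1)"
    hence "int CARD('n) dvd 1" using m[of "k+2" "k+1"] by (simp only: ofint_eq) simp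
    thus False using N by simp
  qed
qed

lemma pa_same: "pair (alphav k :: 'n lat) (Lam k) = 1"
  using arith_cases(1)[of "int CARD('n)" k] n3
  unfolding pair_alphav snd_Lam by simp

lemma pa_next: "pair (alphav k :: 'n lat) (Lam (k+1)) = 0"
  using arith_cases(2)[of "int CARD('n)" k] n3
  unfolding pair_alphav snd_Lam by simp

lemma pa_prev: "pair (alphav (k+1) :: 'n lat) (Lam k) = 0"
  using arith_cases(3)[of "int CARD('n)" k] n3
  unfolding pair_alphav snd_Lam by (simp add: ac_simps)

lemma pa_aa: "pair (alphav k :: 'n lat) (alpha k) = 2"
  using distinct_idx[of k]
  unfolding pair_alphav snd_alpha fst_alpha by (simp del: of_int_add)

lemma pa_a1: "pair (alphav k :: 'n lat) (alpha (k+1)) = -1"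
  using distinct_idx[of k]
  unfolding pair_alphav snd_alpha fst_alpha by (simp add: add.assoc del: of_int_add)

lemma pa_1a: "pair (alphav (k+1) :: 'n lat) (alpha k) = -1"
  using distinct_idx[of k]
  unfolding pair_alphav snd_alpha fst_alpha by (simp add: add.assoc del: of_int_add)

end



definition dmono :: "('n::nontriv lat \<Rightarrow> 'a::ring_1) \<Rightarrow> 'n lat \<Rightarrow> ('n, 'a) Dalg" where
  "dmono c \<mu> = (\<lambda>\<nu>. if \<nu> = \<mu> then c else (\<lambda>_. 0))"

lemma tau_mono: "tau \<mu> = dmono (\<lambda>_. 1) \<mu>" by (simp add: tau_def dmono_def)
lemma demb_mono: "demb c = dmono c wzero" by (simp add: demb_def dmono_def)

lemma wadd_zero[simp]: "wadd x wzero = x" "wadd wzero x = x"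
  by (simp_all add: wadd_def wzero_def)

lemma wsub_eq_iff: "(wsub \<rho> \<mu> = \<nu>) \<longleftrightarrow> (\<rho> = wadd \<mu> \<nu>)"
  unfolding wsub_def wadd_def wneg_def wsmul_def prod_eq_iff fun_eq_iff
  by (auto simp: algebra_simps)

lemma pair_wadd[simp]: "pair b (wadd x y) = pair b x + pair b y"
  by (simp add: pair_def wadd_def algebra_simps sum.distrib)
lemma pair_wsmul[simp]: "pair b (wsmul c x) = c * pair b x"
  by (simp add: pair_def wsmul_def algebra_simps sum_distrib_left)
lemma pair_wneg[simp]: "pair b (wneg x) = - pair b x"
  by (simp add: wneg_def)
lemma pair_wsub[simp]: "pair b (wsub x y) = pair b x - pair b y"
  by (simp add: wsub_def)
lemma pair_wadd1[simp]: "pair (wadd b c) x = pair b x + pair c x"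
  by (simp add: pair_def wadd_def algebra_simps sum.distrib)
lemma pair_wsmul1[simp]: "pair (wsmul c b) x = c * pair b x"
  by (simp add: pair_def wsmul_def algebra_simps sum_distrib_left)
lemma pair_wneg1[simp]: "pair (wneg b) x = - pair b x"
  by (simp add: wneg_def)

lemma dmul_mono: "dmul (dmono c \<mu>) (dmono d \<nu>) = dmono (\<lambda>l. c l * d (wadd l \<mu>)) (wadd \<mu> \<nu>)"
proof (cases "c = (\<lambda>_. 0)")
  case True
  have "{\<mu>'. dmono c \<mu> \<mu>' \<noteq> (\<lambda>_. 0)} = {}" using True by (auto simp: dmono_def)
  then show ?thesis using True unfolding dmul_def by (auto simp: dmono_def fun_eq_iff)
next
  case False
  have "{\<mu>'. dmono c \<mu> \<mu>' \<noteq> (\<lambda>_. 0)} = {\<mu>}" using False by (auto simp: dmono_def)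
  then show ?thesis unfolding dmul_def
    by (auto simp: dmono_def fun_eq_iff wsub_eq_iff)
qed

lemma dadd_mono: "dadd (dmono c \<mu>) (dmono d \<mu>) = dmono (\<lambda>l. c l + d l) \<mu>"
  by (auto simp: dadd_def dmono_def fun_eq_iff)

context
  assumes n3: "CARD('n::nontriv) \<ge> 3"
begin

lemma pair_sP: "pair (alphav k) (sP k x :: 'n lat) = - pair (alphav k) x"
  unfolding sP_def using pa_aa[OF n3] by simp

lemma sP_invol: "sP k (sP k x :: 'n lat) = x"
proof -
  have "sP k (sP k x) = wsub (wsub x (wsmul (pair (alphav k) x) (alpha k)))
      (wsmul (- pair (alphav k) x) (alpha k))"
    by (simp add: sP_def[of k "sP k x"] pair_sP) (simp add: sP_def)
  also have "\<dots> = x"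
    by (cases x) (simp add: wsub_def wadd_def wneg_def wsmul_def fun_eq_iff)
  finally show ?thesis .
qed

lemma dtil_mono: "dtil k (dmono c \<mu> :: ('n, 'a::ring_1) Dalg) = dmono (\<lambda>l. c (sP k l)) (sP k \<mu>)"
proof -
  have e: "(sP k \<rho> = \<mu>) \<longleftrightarrow> (\<rho> = sP k \<mu>)" for \<rho> :: "'n lat"
    using sP_invol by metis
  show ?thesis unfolding dtil_def dmono_def by (simp add: e fun_eq_iff)
qed

lemma qact_mono:
  fixes f :: "'n mod_ring \<Rightarrow> 'a::ring_1"
  assumes inv: "f (of_int k) * g = 1" "g * f (of_int k) = 1"
  shows "qact f k (dmono c \<mu>) = dmono (\<lambda>l. zpow (f (of_int k)) (pair (alphav k) l) * c (sP k l)
      * zpow (f (of_int k)) (pair (alphav k) \<mu> - pair (alphav k) l)) (sP k \<mu>)"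
proof -
  show ?thesis unfolding qact_def demb_mono dtil_mono dmul_mono
    by (simp add: fpow_def pair_sP)
qed

end



lemma qfact_vals: "qfact 0 = 1" "qfact 1 = 1" "qfact 2 = qbr 2" "qfact (Suc 0) = 1"
  by (simp_all add: qfact_def numeral_2_eq_2 atLeastAtMostSuc_conv)

context qalg begin

lemma sc_comm: "\<iota> a * (\<iota> b * z) = \<iota> b * (\<iota> a * z)"
proof -
  have "\<iota> a * (\<iota> b * z) = \<iota> (a * b) * z" by (simp add: alg_mult mult.assoc)
  also have "\<dots> = \<iota> (b * a) * z" by (simp add: mult.commute)
  finally show ?thesis by (simp add: alg_mult mult.assoc)
qed

lemma serre2:
  assumes s0: "(\<Sum>m\<in>{0..d}. (-1) ^ m * dpow \<iota> x (d - m) * y * dpow \<iota> x m) = 0"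
    and d: "d = 2"
  shows "x * x * y + y * x * x = \<iota> (qbr 2) * (x * y * x)"
proof -
  define c where "c = inverse (qbr 2)"
  have c: "\<iota> (qbr 2) * \<iota> c = 1" using qbr_2_ne unfolding c_def alg_mult[symmetric]
    by (simp add: alg_one)
  have s: "(\<Sum>m\<in>{0..2}. (-1) ^ m * dpow \<iota> x (2 - m) * y * dpow \<iota> x m) = 0"
    using s0 d by simp
  have "{0..2} = {0, 1, 2::nat}" by auto
  hence "\<iota> c * (x * x) * y - x * y * x + y * (\<iota> c * (x * x)) = 0"
    using s by (simp add: dpow_def qfact_vals alg_one c_def power2_eq_square diff_add_eq add_diff_eq mult.assoc)
  moreover have h: "y * (\<iota> c * (x * x)) = \<iota> c * (y * x * x)" by (simp add: sc_left mult.assoc)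
  ultimately have "\<iota> c * (x * x) * y - x * y * x + \<iota> c * (y * x * x) = 0" by simp
  hence "\<iota> (qbr 2) * (\<iota> c * (x * x) * y - x * y * x + \<iota> c * (y * x * x)) = 0" by simp
  hence "(\<iota> (qbr 2) * \<iota> c) * (x * x * y) - \<iota> (qbr 2) * (x * y * x) + (\<iota> (qbr 2) * \<iota> c) * (y * x * x) = 0"
    by (simp add: algebra_simps)
  hence "x * x * y - \<iota> (qbr 2) * (x * y * x) + y * x * x = 0" unfolding c by simp
  thus ?thesis by (simp add: algebra_simps)
qed

lemma key_id:
  assumes invX: "X * gx = 1" "gx * X = 1" and invY: "Y * gy = 1" "gy * Y = 1"
    and sXY: "X * X * Y + Y * X * X = \<iota> (qbr 2) * (X * Y * X)"
    and sYX: "Y * Y * X + X * Y * Y = \<iota> (qbr 2) * (Y * X * Y)"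
  shows "\<iota> (qbr B) * (zpow X (A + 1) * Y * zpow X (- A)) + \<iota> (qbr A) * (zpow Y B * X * zpow Y (1 - B))
     = \<iota> (qbr (A + B)) * (X * Y)"
proof -
  have c1: "zpow X (A + 1) * Y * zpow X (- A) = \<iota> (qbr (A + 1)) * (X * Y) - \<iota> (qbr A) * (Y * X)"
    by (rule conj_formula[OF invX sXY])
  have c2: "zpow Y (B - 1 + 1) * X * zpow Y (- (B - 1)) = \<iota> (qbr (B - 1 + 1)) * (Y * X) - \<iota> (qbr (B - 1)) * (X * Y)"
    by (rule conj_formula[OF invY sYX])
  have c2': "zpow Y B * X * zpow Y (1 - B) = \<iota> (qbr B) * (Y * X) - \<iota> (qbr (B - 1)) * (X * Y)"
    using c2 by simp
  have "\<iota> (qbr B) * (zpow X (A + 1) * Y * zpow X (- A)) + \<iota> (qbr A) * (zpow Y B * X * zpow Y (1 - B))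
     = \<iota> (qbr B * qbr (A + 1) - qbr A * qbr (B - 1)) * (X * Y) + (\<iota> (qbr A) * (\<iota> (qbr B) * (Y * X)) - \<iota> (qbr B) * (\<iota> (qbr A) * (Y * X)))"
    unfolding c1 c2' by (simp add: algebra_simps alg_mult alg_diff)
  also have "\<dots> = \<iota> (qbr (A + B)) * (X * Y)"
    unfolding sc_comm[of "qbr A" "qbr B"] by (simp add: qbr_id)
  finally show ?thesis .
qed

end



theorem mainTheorem6:
  fixes \<iota> :: "Cq \<Rightarrow> 'a::ring_1_no_zero_divisors"
    and f :: "'n::nontriv mod_ring \<Rightarrow> 'a"
    and k :: int
  assumes n3: "CARD('n) \<ge> 3"
    and alg_one: "\<iota> 1 = 1"
    and alg_add: "\<And>x y. \<iota> (x + y) = \<iota> x + \<iota> y"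
    and alg_mult: "\<And>x y. \<iota> (x * y) = \<iota> x * \<iota> y"
    and alg_central: "\<And>c a. \<iota> c * a = a * \<iota> c"
    and f_nonzero: "\<And>i. f i \<noteq> 0"
    and f_invertible: "\<And>i. \<exists>g. f i * g = 1 \<and> g * f i = 1"
    and serre: "\<And>i j. i \<noteq> j \<Longrightarrow>
        (\<Sum>m\<in>{0..nat (1 - cartan i j)}. (-1) ^ m * dpow \<iota> (f i) (nat (1 - cartan i j) - m)
             * f j * dpow \<iota> (f i) m) = 0"
    and rotation: "\<exists>\<sigma>. bij_betw \<sigma> (genA \<iota> f) (genA \<iota> f)
        \<and> (\<forall>x\<in>genA \<iota> f. \<forall>y\<in>genA \<iota> f. \<sigma> (x + y) = \<sigma> x + \<sigma> y \<and> \<sigma> (x * y) = \<sigma> x * \<sigma> y)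
        \<and> (\<forall>c. \<sigma> (\<iota> c) = \<iota> c) \<and> (\<forall>i. \<sigma> (f i) = f (i + 1))"
    and localization: "genL \<iota> f = UNIV"
  shows "dadd
      (dmul (dmul (demb (qbrP \<iota> (alphav (k + 1)))) (tau (Lam k)))
            (qact f k (qact f (k + 1) (tau (Lam (k + 1))))))
      (dmul (dmul (demb (qbrP \<iota> (alphav k))) (qact f (k + 1) (qact f k (tau (Lam k)))))
            (tau (Lam (k + 1))))
    = dmul (dmul (demb (qbrP \<iota> (wadd (alphav k) (alphav (k + 1))))) (qact f k (tau (Lam k))))
           (qact f (k + 1) (tau (Lam (k + 1))))"
proof -
  interpret Q: qalg \<iota> by (rule qalg.intro) (rule alg_one, rule alg_add, rule alg_mult, rule alg_central)
  obtain gx where gx: "f (of_int k) * gx = 1" "gx * f (of_int k) = 1" using f_invertible by blast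
  obtain gy where gy: "f (of_int (k+1)) * gy = 1" "gy * f (of_int (k+1)) = 1" using f_invertible by blast
  have ne: "(of_int k :: 'n mod_ring) \<noteq> of_int (k+1)" using distinct_idx(1)[OF n3, of k] by metis
  have c1: "nat (1 - cartan (of_int k) (of_int (k+1) :: 'n mod_ring)) = 2"
    using ne by (simp add: cartan_def)
  have c2: "nat (1 - cartan (of_int (k+1)) (of_int k :: 'n mod_ring)) = 2"
    using ne by (simp add: cartan_def)
  have sXY: "f (of_int k) * f (of_int k) * f (of_int (k+1)) + f (of_int (k+1)) * f (of_int k) * f (of_int k)
      = \<iota> (qbr 2) * (f (of_int k) * f (of_int (k+1)) * f (of_int k))"
    by (rule Q.serre2[OF serre[OF ne] c1])
  have sYX: "f (of_int (k+1)) * f (of_int (k+1)) * f (of_int k) + f (of_int k) * f (of_int (k+1)) * f (of_int (k+1))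
      = \<iota> (qbr 2) * (f (of_int (k+1)) * f (of_int k) * f (of_int (k+1)))"
    by (rule Q.serre2[OF serre[OF ne[symmetric]] c2])
  have T2: "qact f k (tau (Lam k)) = dmono (\<lambda>l. f (of_int k)) (sP k (Lam k))"
    unfolding tau_mono qact_mono[where f=f and k=k and g=gx, OF n3 gx] by (simp add: pa_same[OF n3] zpow_add[OF gx])
  have T1: "qact f (k+1) (tau (Lam (k+1))) = dmono (\<lambda>l. f (of_int (k+1))) (sP (k+1) (Lam (k+1)))"
    unfolding tau_mono qact_mono[where f=f and k="k+1" and g=gy, OF n3 gy] by (simp add: pa_same[OF n3] zpow_add[OF gy] del: of_int_add)
  have a1: "pair (alphav k) (sP (k+1) (Lam (k+1)) :: 'n lat) = 1"
    by (simp add: sP_def pa_next[OF n3] pa_same[OF n3] pa_a1[OF n3])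
  have b1: "pair (alphav (k+1)) (sP k (Lam k) :: 'n lat) = 1"
    by (simp add: sP_def pa_prev[OF n3] pa_same[OF n3] pa_1a[OF n3])
  have T3: "qact f k (qact f (k+1) (tau (Lam (k+1)))) = dmono (\<lambda>l. zpow (f (of_int k)) (pair (alphav k) l)
      * f (of_int (k+1)) * zpow (f (of_int k)) (1 - pair (alphav k) l)) (sP k (sP (k+1) (Lam (k+1))))"
    unfolding T1 qact_mono[where f=f and k=k and g=gx, OF n3 gx] a1 by simp
  have T4: "qact f (k+1) (qact f k (tau (Lam k))) = dmono (\<lambda>l. zpow (f (of_int (k+1))) (pair (alphav (k+1)) l)
      * f (of_int k) * zpow (f (of_int (k+1))) (1 - pair (alphav (k+1)) l)) (sP (k+1) (sP k (Lam k)))"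
    unfolding T2 qact_mono[where f=f and k="k+1" and g=gy, OF n3 gy] b1 by simp
  have e1: "wadd (Lam k) (sP k (sP (k+1) (Lam (k+1)))) = wadd (sP k (Lam k)) (sP (k+1) (Lam (k+1)) :: 'n lat)"
    apply (simp add: sP_def pa_same[OF n3] pa_next[OF n3] pa_prev[OF n3] pa_aa[OF n3] pa_a1[OF n3] pa_1a[OF n3])
    apply (simp add: wadd_def wsub_def wsmul_def wneg_def prod_eq_iff fun_eq_iff algebra_simps)
    done
  have e2: "wadd (sP (k+1) (sP k (Lam k))) (Lam (k+1)) = wadd (sP k (Lam k)) (sP (k+1) (Lam (k+1)) :: 'n lat)"
    apply (simp add: sP_def pa_same[OF n3] pa_next[OF n3] pa_prev[OF n3] pa_aa[OF n3] pa_a1[OF n3] pa_1a[OF n3])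
    apply (simp add: wadd_def wsub_def wsmul_def wneg_def prod_eq_iff fun_eq_iff algebra_simps)
    done
  show ?thesis
    unfolding T3 T4
    unfolding T1 T2
    unfolding tau_mono demb_mono dmul_mono wadd_zero e1 e2 dadd_mono
  proof (intro arg_cong2[where f=dmono] refl ext)
    fix l :: "'n lat"
    show "qbrP \<iota> (alphav (k + 1)) l * 1 * (zpow (f (of_int k)) (pair (alphav k) (wadd l (Lam k))) * f (of_int (k + 1)) *
          zpow (f (of_int k)) (1 - pair (alphav k) (wadd l (Lam k)))) +
          qbrP \<iota> (alphav k) l * (zpow (f (of_int (k + 1))) (pair (alphav (k + 1)) l) * f (of_int k) *
           zpow (f (of_int (k + 1))) (1 - pair (alphav (k + 1)) l)) * 1 =
          qbrP \<iota> (wadd (alphav k) (alphav (k + 1))) l * f (of_int k) * f (of_int (k + 1))"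
      using Q.key_id[OF gx gy sXY sYX, of "pair (alphav (k+1)) l" "pair (alphav k) l"]
      by (simp add: qbrP_def pa_same[OF n3] mult.assoc add.commute)
  qed
qed


end
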